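(* Let $(X,\mathcal{B})$ be an $\mathrm{SQS}(v)$ with $v \ge 8$ and let $B \in \mathcal{B}$. Let $p$ be the probability that a block is available. Then the expected number of available minimal repair sets for $B$ is \[E(p) = 3(r_2-1)^2p^2 + 2(r_2-1)\bigl(3r_1^2 - 12r_1r_2 + 6r_1 + 11r_2^2 - 10r_2 + 2\bigr)p^3 + (r_1 - 3r_2 + 2)^4 p^4,\] where $r_1 = \binom{v-1}{2}/3$ and $r_2 = (v-2)/2$.
   Context: A Steiner quadruple system $\mathrm{SQS}(v)$ is a $3$-$(v,4,1)$-design: a set $X$ of $v$ points with a collection $\mathcal{B}$ of $4$-subsets (blocks) such that every $3$-subset of $X$ lies in exactly one block; $r_1$ is the number of blocks containing a given point and $r_2$ the number containing a given pair of points. Reliability model: fix a block $B\in\mathcal{B}$. A repair set for $B$ is a subset $\mathcal{P}\subseteq \mathcal{B}\setminus\{B\}$ with $B \subseteq \bigcup_{B'\in\mathcal{P}} B'$; it is minimal if no proper subset is a repair set. Each block of $\mathcal{B}\setminus\{B\}$ is, independently of the others, available with probability $p\in[0,1]$; a repair set is available if all of its blocks are available. $E(p)$ is the expected number of available minimal repair sets for $B$. *)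

theory Defs
  imports Complex_Main
begin

definition SQS :: "'a set \<Rightarrow> 'a set set \<Rightarrow> nat \<Rightarrow> bool" where
  "SQS X \<B> v \<longleftrightarrow> finite X \<and> card X = v \<and>
     (\<forall>b\<in>\<B>. b \<subseteq> X \<and> card b = 4) \<and>
     (\<forall>T. T \<subseteq> X \<and> card T = 3 \<longrightarrow> (\<exists>!b. b \<in> \<B> \<and> T \<subseteq> b))"

definition repair_set :: "'a set set \<Rightarrow> 'a set \<Rightarrow> 'a set set \<Rightarrow> bool" where
  "repair_set \<B> B P \<longleftrightarrow> P \<subseteq> \<B> - {B} \<and> B \<subseteq> \<Union>P"

definition minimal_repair_set :: "'a set set \<Rightarrow> 'a set \<Rightarrow> 'a set set \<Rightarrow> bool" where
  "minimal_repair_set \<B> B P \<longleftrightarrow> repair_set \<B> B P \<and> (\<forall>Q. Q \<subset> P \<longrightarrow> \<not> repair_set \<B> B Q)"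

text \<open>Expected number of available minimal repair sets: each block of \<B> - {B} is
  independently available with probability p; the random set A of available blocks has
  probability p^|A| (1-p)^(|\<B>-{B}| - |A|), and the number of available minimal repair
  sets is the number of minimal repair sets contained in A.\<close>
definition expected_available_repair :: "'a set set \<Rightarrow> 'a set \<Rightarrow> real \<Rightarrow> real" where
  "expected_available_repair \<B> B p =
     (\<Sum>A\<in>Pow (\<B> - {B}).
        p ^ card A * (1 - p) ^ (card (\<B> - {B}) - card A) *
        real (card {P. P \<subseteq> A \<and> minimal_repair_set \<B> B P}))"

end

theory Submission
  imports Defs "HOL-Library.FuncSet"
begin


lemma sum_Pow_insert:
  assumes "finite A" "x \<notin> A"
  shows "(\<Sum>J\<in>Pow (insert x A). F J) = (\<Sum>J\<in>Pow A. F J) + (\<Sum>J\<in>Pow A. F (insert x J))"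
proof -
  have d: "Pow A \<inter> insert x ` Pow A = {}" using assms by auto
  have i: "inj_on (insert x) (Pow A)" using assms unfolding inj_on_def by (auto simp: insert_ident)
  have "(\<Sum>J\<in>Pow (insert x A). F J) = (\<Sum>J\<in>Pow A. F J) + (\<Sum>J\<in>insert x ` Pow A. F J)"
    unfolding Pow_insert using assms d by (intro sum.union_disjoint) auto
  also have "(\<Sum>J\<in>insert x ` Pow A. F J) = (\<Sum>J\<in>Pow A. F (insert x J))"
    using sum.reindex[OF i] by simp
  finally show ?thesis .
qed

definition subB :: "'a \<Rightarrow> 'a \<Rightarrow> 'a \<Rightarrow> 'a \<Rightarrow> nat \<Rightarrow> 'a set" where
  "subB a b c d i = (if i = 0 then {a} else if i = 1 then {b} else if i = 2 then {c} else if i = 3 then {d}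
     else if i = 4 then {a,b} else if i = 5 then {a,c} else if i = 6 then {a,d}
     else if i = 7 then {b,c} else if i = 8 then {b,d} else {c,d})"

lemma subB_simps:
  "subB a b c d 0 = {a}" "subB a b c d 1 = {b}" "subB a b c d (Suc 0) = {b}" "subB a b c d 2 = {c}" "subB a b c d 3 = {d}"
  "subB a b c d 4 = {a,b}" "subB a b c d 5 = {a,c}" "subB a b c d 6 = {a,d}"
  "subB a b c d 7 = {b,c}" "subB a b c d 8 = {b,d}" "subB a b c d 9 = {c,d}"
  by (simp_all add: subB_def)

definition coverJ :: "'a \<Rightarrow> 'a \<Rightarrow> 'a \<Rightarrow> 'a \<Rightarrow> nat set \<Rightarrow> bool" where
  "coverJ a b c d J \<longleftrightarrow> (\<exists>i\<in>J. a \<in> subB a b c d i) \<and> (\<exists>i\<in>J. b \<in> subB a b c d i) \<and>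
     (\<exists>i\<in>J. c \<in> subB a b c d i) \<and> (\<exists>i\<in>J. d \<in> subB a b c d i)"

definition privJ :: "'a \<Rightarrow> 'a \<Rightarrow> 'a \<Rightarrow> 'a \<Rightarrow> nat set \<Rightarrow> bool" where
  "privJ a b c d J \<longleftrightarrow> (\<forall>i\<in>J. (\<forall>j\<in>J - {i}. a \<notin> subB a b c d j) \<or> (\<forall>j\<in>J - {i}. b \<notin> subB a b c d j) \<or>
     (\<forall>j\<in>J - {i}. c \<notin> subB a b c d j) \<or> (\<forall>j\<in>J - {i}. d \<notin> subB a b c d j))"

lemma privJ_mono: "privJ a b c d J \<Longrightarrow> J' \<subseteq> J \<Longrightarrow> privJ a b c d J'"
  unfolding privJ_def by blast

definition wJ :: "real \<Rightarrow> real \<Rightarrow> real \<Rightarrow> nat set \<Rightarrow> real" where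
  "wJ n0 m p J = p ^ card J * (\<Prod>i\<in>J. if i < 4 then n0 else m)"

fun TT :: "'a \<Rightarrow> 'a \<Rightarrow> 'a \<Rightarrow> 'a \<Rightarrow> real \<Rightarrow> real \<Rightarrow> real \<Rightarrow> nat set \<Rightarrow> nat list \<Rightarrow> real" where
  "TT a b c d n0 m p J [] = (if coverJ a b c d J then wJ n0 m p J else 0)"
| "TT a b c d n0 m p J (x#xs) = TT a b c d n0 m p J xs +
     (if privJ a b c d (insert x J) then TT a b c d n0 m p (insert x J) xs else 0)"

lemma TT_sum:
  "distinct xs \<Longrightarrow> set xs \<inter> J = {} \<Longrightarrow> privJ a b c d J \<Longrightarrow>
   TT a b c d n0 m p J xs = (\<Sum>K\<in>Pow (set xs). if coverJ a b c d (J \<union> K) \<and> privJ a b c d (J \<union> K)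
        then wJ n0 m p (J \<union> K) else 0)"
proof (induction xs arbitrary: J)
  case Nil
  then show ?case by simp
next
  case (Cons x xs)
  have eq: "\<And>K. J \<union> insert x K = insert x J \<union> K" by auto
  have s: "(\<Sum>K\<in>Pow (set (x#xs)). if coverJ a b c d (J \<union> K) \<and> privJ a b c d (J \<union> K)
        then wJ n0 m p (J \<union> K) else 0) =
     (\<Sum>K\<in>Pow (set xs). if coverJ a b c d (J \<union> K) \<and> privJ a b c d (J \<union> K)
        then wJ n0 m p (J \<union> K) else 0) +
     (\<Sum>K\<in>Pow (set xs). if coverJ a b c d (insert x J \<union> K) \<and> privJ a b c d (insert x J \<union> K)
        then wJ n0 m p (insert x J \<union> K) else 0)"
    using Cons.prems by (simp add: sum_Pow_insert eq del: Un_insert_right Un_insert_left cong: if_cong)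
  show ?case
  proof (cases "privJ a b c d (insert x J)")
    case True
    then show ?thesis using Cons s by auto
  next
    case False
    have np: "\<not> privJ a b c d (insert x J \<union> K)" for K
      using privJ_mono[of a b c d "insert x J \<union> K" "insert x J"] False by blast
    have z: "(\<Sum>K\<in>Pow (set xs). if coverJ a b c d (insert x J \<union> K) \<and> privJ a b c d (insert x J \<union> K)
        then wJ n0 m p (insert x J \<union> K) else 0) = 0"
      using np by (simp del: Un_insert_left)
    show ?thesis using Cons.prems Cons.IH s False z by simp
  qed
qed

lemma core:
  fixes n0 m p :: real
  assumes "distinct [a,b,c,d]"
  shows "(\<Sum>K\<in>Pow {0..<10::nat}. if coverJ a b c d K \<and> privJ a b c d K then wJ n0 m p K else 0)
     = 3 * m^2 * p^2 + (6*m*n0^2 + 12*m^2*n0 + 4*m^3) * p^3 + n0^4 * p^4"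
proof -
  have e: "{0..<10::nat} = set [0,1,2,3,4,5,6,7,8,9]" by auto
  have "TT a b c d n0 m p {} [0,1,2,3,4,5,6,7,8,9] = 
      (\<Sum>K\<in>Pow (set [0,1,2,3,4,5,6,7,8,9]). if coverJ a b c d ({} \<union> K) \<and> privJ a b c d ({} \<union> K) then wJ n0 m p ({} \<union> K) else 0)"
    by (rule TT_sum) (simp_all add: privJ_def)
  hence "TT a b c d n0 m p {} [0,1,2,3,4,5,6,7,8,9] = 
      (\<Sum>K\<in>Pow {0..<10::nat}. if coverJ a b c d K \<and> privJ a b c d K then wJ n0 m p K else 0)"
    by (simp only: e Un_empty_left)
  moreover have "TT a b c d n0 m p {} [0,1,2,3,4,5,6,7,8,9] = 
     3 * m^2 * p^2 + (6*m*n0^2 + 12*m^2*n0 + 4*m^3) * p^3 + n0^4 * p^4"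
  proof -
    have n: "a \<noteq> b" "a \<noteq> c" "a \<noteq> d" "b \<noteq> c" "b \<noteq> d" "c \<noteq> d"
            "b \<noteq> a" "c \<noteq> a" "d \<noteq> a" "c \<noteq> b" "d \<noteq> b" "d \<noteq> c" using assms by auto
    show ?thesis
      apply (simp add: n privJ_def coverJ_def subB_simps wJ_def insert_Diff_if split del: if_split)
      apply (simp add: algebra_simps power2_eq_square power3_eq_cube power4_eq_xxxx)
      done
  qed
  ultimately show ?thesis by simp
qed



lemma card4_obtain:
  assumes "card B = 4"
  obtains a b c d where "B = {a,b,c,d}" "distinct [a,b,c,d]"
proof -
  have "\<exists>a b c d. B = {a,b,c,d} \<and> distinct [a,b,c,d]"
    using assms by (auto simp: card_Suc_eq numeral_eq_Suc)
  then show ?thesis using that by blast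
qed

lemma binom_Pow:
  fixes p q :: real
  assumes "finite S"
  shows "(\<Sum>D\<in>Pow S. p ^ card D * q ^ (card S - card D)) = (p + q) ^ card S"
  using assms
proof (induction S rule: finite_induct)
  case empty
  then show ?case by simp
next
  case (insert x F)
  have c1: "card (insert x D) = Suc (card D)" if "D \<in> Pow F" for D
    using that insert(1,2) by (subst card_insert_disjoint) (auto intro: finite_subset)
  have c2: "card D \<le> card F" if "D \<in> Pow F" for D
    using that insert card_mono by auto
  have "(\<Sum>D\<in>Pow (insert x F). p ^ card D * q ^ (card (insert x F) - card D))
     = (\<Sum>D\<in>Pow F. p ^ card D * q ^ (Suc (card F) - card D)) +
       (\<Sum>D\<in>Pow F. p ^ card (insert x D) * q ^ (Suc (card F) - card (insert x D)))"
    using insert by (simp add: sum_Pow_insert)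
  also have "(\<Sum>D\<in>Pow F. p ^ card D * q ^ (Suc (card F) - card D)) = 
      q * (\<Sum>D\<in>Pow F. p ^ card D * q ^ (card F - card D))"
    unfolding sum_distrib_left
    by (intro sum.cong refl) (simp add: c2 Suc_diff_le)
  also have "(\<Sum>D\<in>Pow F. p ^ card (insert x D) * q ^ (Suc (card F) - card (insert x D)))
      = p * (\<Sum>D\<in>Pow F. p ^ card D * q ^ (card F - card D))"
    unfolding sum_distrib_left
    by (intro sum.cong refl) (simp add: c1)
  finally show ?case using insert by (simp add: algebra_simps)
qed

lemma expected_eq:
  fixes p :: real
  assumes C: "finite C" and M: "M \<subseteq> Pow C"
  shows "(\<Sum>A\<in>Pow C. p ^ card A * (1 - p) ^ (card C - card A) * real (card {P. P \<subseteq> A \<and> P \<in> M}))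
       = (\<Sum>P\<in>M. p ^ card P)"
proof -
  have fM: "finite M" using M C by (meson finite_Pow_iff finite_subset)
  have cnt: "real (card {P. P \<subseteq> A \<and> P \<in> M}) = (\<Sum>P\<in>M. if P \<subseteq> A then 1 else 0)" for A
  proof -
    have "{P. P \<subseteq> A \<and> P \<in> M} = {P\<in>M. P \<subseteq> A}" by auto
    then show ?thesis using sum.inter_filter[OF fM, of "\<lambda>_. (1::real)" "\<lambda>P. P \<subseteq> A"] by simp
  qed
  have "(\<Sum>A\<in>Pow C. p ^ card A * (1 - p) ^ (card C - card A) * real (card {P. P \<subseteq> A \<and> P \<in> M}))
      = (\<Sum>A\<in>Pow C. \<Sum>P\<in>M. if P \<subseteq> A then p ^ card A * (1 - p) ^ (card C - card A) else 0)"
    unfolding cnt sum_distrib_left by (intro sum.cong refl) auto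
  also have "\<dots> = (\<Sum>P\<in>M. \<Sum>A\<in>Pow C. if P \<subseteq> A then p ^ card A * (1 - p) ^ (card C - card A) else 0)"
    by (rule sum.swap)
  also have "\<dots> = (\<Sum>P\<in>M. p ^ card P)"
  proof (intro sum.cong refl)
    fix P assume PM: "P \<in> M"
    hence PC: "P \<subseteq> C" using M by auto
    have fP: "finite P" using PC C finite_subset by auto
    let ?w = "\<lambda>A. p ^ card A * (1 - p) ^ (card C - card A)"
    have "(\<Sum>A\<in>Pow C. if P \<subseteq> A then ?w A else 0) = (\<Sum>A\<in>{A\<in>Pow C. P \<subseteq> A}. ?w A)"
      using sum.inter_filter[of "Pow C" ?w "\<lambda>A. P \<subseteq> A"] C by simp
    also have "{A\<in>Pow C. P \<subseteq> A} = (\<lambda>D. P \<union> D) ` Pow (C - P)"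
    proof
      show "{A \<in> Pow C. P \<subseteq> A} \<subseteq> (\<union>) P ` Pow (C - P)"
      proof
        fix A assume "A \<in> {A \<in> Pow C. P \<subseteq> A}"
        hence "A = P \<union> (A - P)" "A - P \<in> Pow (C - P)" by auto
        thus "A \<in> (\<union>) P ` Pow (C - P)" by blast
      qed
    qed (use PC in auto)
    also have "(\<Sum>A\<in>(\<lambda>D. P \<union> D) ` Pow (C - P). ?w A) = (\<Sum>D\<in>Pow (C - P). ?w (P \<union> D))"
    proof -
      have inj: "inj_on ((\<union>) P) (Pow (C - P))" by (auto simp: inj_on_def)
      show ?thesis by (simp add: sum.reindex[OF inj])
    qed
    also have "\<dots> = (\<Sum>D\<in>Pow (C - P). p ^ card P * (p ^ card D * (1 - p) ^ (card (C - P) - card D)))"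
    proof (intro sum.cong refl)
      fix D assume D: "D \<in> Pow (C - P)"
      have fD: "finite D" using D C finite_subset by auto
      have cu: "card (P \<union> D) = card P + card D" using D fP fD by (subst card_Un_disjoint) auto
      have cCP: "card (C - P) = card C - card P" using PC fP by (simp add: card_Diff_subset)
      have "card D \<le> card (C - P)" using D C by (auto intro: card_mono)
      moreover have "card P \<le> card C" using PC C card_mono by auto
      ultimately have e: "card C - (card P + card D) = card (C - P) - card D" using cCP by simp
      show "?w (P \<union> D) = p ^ card P * (p ^ card D * (1 - p) ^ (card (C - P) - card D))"
        unfolding cu e by (simp add: power_add)
    qed
    also have "\<dots> = p ^ card P"
      using binom_Pow[of "C - P" p "1 - p"] C by (simp add: sum_distrib_left[symmetric])
    finally show "(\<Sum>A\<in>Pow C. if P \<subseteq> A then ?w A else 0) = p ^ card P" .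
  qed
  finally show ?thesis .
qed


lemma SQS_D:
  assumes "SQS X Bs v"
  shows "finite X" "card X = v" "\<forall>b\<in>Bs. b \<subseteq> X \<and> card b = 4"
    "\<forall>T. T \<subseteq> X \<and> card T = 3 \<longrightarrow> (\<exists>!b. b \<in> Bs \<and> T \<subseteq> b)"
proof -
  have D: "finite X \<and> card X = v \<and> (\<forall>b\<in>Bs. b \<subseteq> X \<and> card b = 4) \<and>
    (\<forall>T. T \<subseteq> X \<and> card T = 3 \<longrightarrow> (\<exists>!b. b \<in> Bs \<and> T \<subseteq> b))"
    using assms unfolding SQS_def .
  show "finite X" using D by (rule conjunct1)
  show "card X = v" using D[THEN conjunct2] by (rule conjunct1)
  show "\<forall>b\<in>Bs. b \<subseteq> X \<and> card b = 4" using D[THEN conjunct2, THEN conjunct2] by (rule conjunct1)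
  show "\<forall>T. T \<subseteq> X \<and> card T = 3 \<longrightarrow> (\<exists>!b. b \<in> Bs \<and> T \<subseteq> b)"
    using D[THEN conjunct2, THEN conjunct2] by (rule conjunct2)
qed

lemma SQS_basic:
  assumes "SQS X Bs v"
  shows "finite X" "card X = v" "\<And>b. b \<in> Bs \<Longrightarrow> b \<subseteq> X" "\<And>b. b \<in> Bs \<Longrightarrow> card b = 4" "finite Bs"
proof -
  have h: "finite X" "card X = v" "\<forall>b\<in>Bs. b \<subseteq> X \<and> card b = 4"
    using SQS_D(1-3)[OF assms] by auto
  show "finite X" "card X = v" "\<And>b. b \<in> Bs \<Longrightarrow> b \<subseteq> X" "\<And>b. b \<in> Bs \<Longrightarrow> card b = 4"
    using h by auto
  hence "Bs \<subseteq> Pow X" by auto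
  thus "finite Bs" using \<open>finite X\<close> by (meson finite_Pow_iff finite_subset)
qed

lemma SQS_unique:
  assumes "SQS X Bs v" "b1 \<in> Bs" "b2 \<in> Bs" "T \<subseteq> b1" "T \<subseteq> b2" "card T = 3"
  shows "b1 = b2"
proof -
  have "T \<subseteq> X" using SQS_basic(3)[OF assms(1) assms(2)] assms(4) by auto
  then have "\<exists>!b. b \<in> Bs \<and> T \<subseteq> b" using SQS_D(4)[OF assms(1), rule_format, of T] assms(6) by blast
  then show ?thesis using assms by blast
qed

lemma SQS_exists:
  assumes "SQS X Bs v" "T \<subseteq> X" "card T = 3"
  shows "\<exists>b\<in>Bs. T \<subseteq> b"
proof -
  have "\<exists>!b. b \<in> Bs \<and> T \<subseteq> b" using SQS_D(4)[OF assms(1), rule_format, of T] assms(2,3) by blast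
  then show ?thesis by blast
qed

lemma SQS_big_inter:
  assumes "SQS X Bs v" "b1 \<in> Bs" "b2 \<in> Bs" "3 \<le> card (b1 \<inter> b2)"
  shows "b1 = b2"
proof -
  obtain T where "T \<subseteq> b1 \<inter> b2" "card T = 3"
    using obtain_subset_with_card_n[OF assms(4)] by blast
  then show ?thesis using SQS_unique[OF assms(1,2,3)] by auto
qed

lemma SQS_pair_count:
  assumes S: "SQS X Bs v" and xy: "x \<in> X" "y \<in> X" "x \<noteq> y"
  shows "2 * card {b\<in>Bs. x \<in> b \<and> y \<in> b} = v - 2"
proof -
  let ?R = "{b\<in>Bs. x \<in> b \<and> y \<in> b}"
  have fR: "finite ?R" using SQS_basic(5)[OF S] by auto
  have eq: "X - {x,y} = (\<Union>b\<in>?R. b - {x,y})"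
  proof
    show "X - {x, y} \<subseteq> (\<Union>b\<in>?R. b - {x, y})"
    proof
      fix z assume z: "z \<in> X - {x,y}"
      have "card {x,y,z} = 3" using z xy by auto
      moreover have "{x,y,z} \<subseteq> X" using z xy by auto
      ultimately obtain b where "b \<in> Bs" "{x,y,z} \<subseteq> b" using SQS_exists[OF S] by blast
      thus "z \<in> (\<Union>b\<in>?R. b - {x, y})" using z by auto
    qed
  qed (use SQS_basic(3)[OF S] in auto)
  have "card (\<Union>b\<in>?R. b - {x,y}) = (\<Sum>b\<in>?R. card (b - {x,y}))"
  proof (rule card_UN_disjoint[OF fR])
    show "\<forall>b\<in>?R. finite (b - {x, y})" using SQS_basic(4)[OF S] card.infinite by fastforce
    show "\<forall>b1\<in>?R. \<forall>b2\<in>?R. b1 \<noteq> b2 \<longrightarrow> (b1 - {x, y}) \<inter> (b2 - {x, y}) = {}"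
    proof (intro ballI impI)
      fix b1 b2 assume b: "b1 \<in> ?R" "b2 \<in> ?R" "b1 \<noteq> b2"
      show "(b1 - {x, y}) \<inter> (b2 - {x, y}) = {}"
      proof (rule ccontr)
        assume "(b1 - {x, y}) \<inter> (b2 - {x, y}) \<noteq> {}"
        then obtain z where z: "z \<in> b1" "z \<in> b2" "z \<noteq> x" "z \<noteq> y" by auto
        have "card {x,y,z} = 3" using z xy by auto
        then have "b1 = b2" using SQS_unique[OF S, of b1 b2 "{x,y,z}"] b z by auto
        thus False using b by simp
      qed
    qed
  qed
  also have "\<dots> = (\<Sum>b\<in>?R. 2)"
  proof (intro sum.cong refl)
    fix b assume b: "b \<in> ?R"
    have "card b = 4" "finite b" using SQS_basic(4)[OF S] b card.infinite by fastforce+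
    thus "card (b - {x, y}) = 2" using b xy by (subst card_Diff_subset) auto
  qed
  finally have "card (X - {x,y}) = 2 * card ?R" using eq by simp
  moreover have "card (X - {x,y}) = v - 2"
    using SQS_basic(1,2)[OF S] xy by (subst card_Diff_subset) auto
  ultimately show ?thesis by simp
qed

lemma SQS_point_count:
  assumes S: "SQS X Bs v" and x: "x \<in> X"
  shows "3 * card {b\<in>Bs. x \<in> b} = (v - 1) choose 2"
proof -
  let ?R = "{b\<in>Bs. x \<in> b}"
  let ?Q = "{T. T \<subseteq> X - {x} \<and> card T = 2}"
  have fR: "finite ?R" using SQS_basic(5)[OF S] by auto
  have fX: "finite X" using SQS_basic(1)[OF S] .
  have cQ: "card ?Q = (v - 1) choose 2"
    using n_subsets[of "X - {x}" 2] fX x SQS_basic(2)[OF S] by simp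
  have eq: "?Q = (\<Union>b\<in>?R. {T. T \<subseteq> b - {x} \<and> card T = 2})"
  proof
    show "?Q \<subseteq> (\<Union>b\<in>?R. {T. T \<subseteq> b - {x} \<and> card T = 2})"
    proof
      fix T assume T: "T \<in> ?Q"
      have fT: "finite T" using T fX finite_subset by auto
      have "x \<notin> T" using T by auto
      hence "card (insert x T) = 3" using T fT by simp
      moreover have "insert x T \<subseteq> X" using T x by auto
      ultimately obtain b where "b \<in> Bs" "insert x T \<subseteq> b" using SQS_exists[OF S] by blast
      thus "T \<in> (\<Union>b\<in>?R. {T. T \<subseteq> b - {x} \<and> card T = 2})" using T by auto
    qed
  qed (use SQS_basic(3)[OF S] in auto)
  have "card (\<Union>b\<in>?R. {T. T \<subseteq> b - {x} \<and> card T = 2}) = (\<Sum>b\<in>?R. card {T. T \<subseteq> b - {x} \<and> card T = 2})"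
  proof (rule card_UN_disjoint[OF fR])
    show "\<forall>b\<in>?R. finite {T. T \<subseteq> b - {x} \<and> card T = 2}"
    proof
      fix b assume "b \<in> ?R"
      hence "finite b" using SQS_basic(4)[OF S] card.infinite by fastforce
      thus "finite {T. T \<subseteq> b - {x} \<and> card T = 2}" by (rule rev_finite_subset[OF finite_Pow_iff[THEN iffD2]]) auto
    qed
    show "\<forall>b1\<in>?R. \<forall>b2\<in>?R. b1 \<noteq> b2 \<longrightarrow> {T. T \<subseteq> b1 - {x} \<and> card T = 2} \<inter> {T. T \<subseteq> b2 - {x} \<and> card T = 2} = {}"
    proof (intro ballI impI)
      fix b1 b2 assume b: "b1 \<in> ?R" "b2 \<in> ?R" "b1 \<noteq> b2"
      show "{T. T \<subseteq> b1 - {x} \<and> card T = 2} \<inter> {T. T \<subseteq> b2 - {x} \<and> card T = 2} = {}"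
      proof (rule ccontr)
        assume "{T. T \<subseteq> b1 - {x} \<and> card T = 2} \<inter> {T. T \<subseteq> b2 - {x} \<and> card T = 2} \<noteq> {}"
        then obtain T where T: "T \<subseteq> b1 - {x}" "T \<subseteq> b2 - {x}" "card T = 2" by auto
        have fT: "finite T" using T(3) card.infinite by fastforce
        have "x \<notin> T" using T by auto
        hence "card (insert x T) = 3" using T fT by simp
        then have "b1 = b2" using SQS_unique[OF S, of b1 b2 "insert x T"] b T by auto
        thus False using b by simp
      qed
    qed
  qed
  also have "\<dots> = (\<Sum>b\<in>?R. 3)"
  proof (intro sum.cong refl)
    fix b assume b: "b \<in> ?R"
    have "card b = 4" "finite b" using SQS_basic(4)[OF S] b card.infinite by fastforce+
    hence "card (b - {x}) = 3" using b by simp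
    moreover have "(3::nat) choose 2 = 3" by (simp add: choose_two)
    ultimately show "card {T. T \<subseteq> b - {x} \<and> card T = 2} = 3"
      using n_subsets[of "b - {x}" 2] \<open>finite b\<close> by simp
  qed
  finally show ?thesis using eq cQ by simp
qed


definition MCB :: "'a set \<Rightarrow> 'a set set set" where
  "MCB B = {S. S \<subseteq> Pow B \<and> B \<subseteq> \<Union>S \<and> (\<forall>s\<in>S. \<not> B \<subseteq> \<Union>(S - {s}))}"

lemma minimal_iff:
  "minimal_repair_set Bs B P \<longleftrightarrow>
     P \<subseteq> Bs - {B} \<and> inj_on (\<lambda>b. b \<inter> B) P \<and> (\<lambda>b. b \<inter> B) ` P \<in> MCB B"
proof
  assume m: "minimal_repair_set Bs B P"
  have PC: "P \<subseteq> Bs - {B}" and cov: "B \<subseteq> \<Union>P" using m unfolding minimal_repair_set_def repair_set_def by auto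
  have nr: "\<And>Q. Q \<subset> P \<Longrightarrow> \<not> B \<subseteq> \<Union>Q" using m PC unfolding minimal_repair_set_def repair_set_def by blast
  have inj: "inj_on (\<lambda>b. b \<inter> B) P"
  proof (rule inj_onI, rule ccontr)
    fix b1 b2 assume b: "b1 \<in> P" "b2 \<in> P" "b1 \<inter> B = b2 \<inter> B" "b1 \<noteq> b2"
    have "B \<subseteq> \<Union>(P - {b1})"
    proof
      fix x assume x: "x \<in> B"
      then obtain b where "b \<in> P" "x \<in> b" using cov by auto
      thus "x \<in> \<Union>(P - {b1})" using b x by (cases "b = b1") auto
    qed
    moreover have "P - {b1} \<subset> P" using b by auto
    ultimately show False using nr by blast
  qed
  moreover have "(\<lambda>b. b \<inter> B) ` P \<in> MCB B"
    unfolding MCB_def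
  proof (intro CollectI conjI ballI)
    show "(\<lambda>b. b \<inter> B) ` P \<subseteq> Pow B" by auto
    show "B \<subseteq> \<Union> ((\<lambda>b. b \<inter> B) ` P)" using cov by auto
    fix s assume s: "s \<in> (\<lambda>b. b \<inter> B) ` P"
    then obtain b where b: "b \<in> P" "s = b \<inter> B" by auto
    show "\<not> B \<subseteq> \<Union> ((\<lambda>b. b \<inter> B) ` P - {s})"
    proof
      assume h: "B \<subseteq> \<Union> ((\<lambda>b. b \<inter> B) ` P - {s})"
      have "B \<subseteq> \<Union>(P - {b})"
      proof
        fix x assume "x \<in> B"
        then obtain b' where "b' \<in> P" "x \<in> b' \<inter> B" "b' \<inter> B \<noteq> s" using h by auto
        thus "x \<in> \<Union>(P - {b})" using b by auto
      qed
      moreover have "P - {b} \<subset> P" using b by auto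
      ultimately show False using nr by blast
    qed
  qed
  ultimately show "P \<subseteq> Bs - {B} \<and> inj_on (\<lambda>b. b \<inter> B) P \<and> (\<lambda>b. b \<inter> B) ` P \<in> MCB B"
    using PC by blast
next
  assume h: "P \<subseteq> Bs - {B} \<and> inj_on (\<lambda>b. b \<inter> B) P \<and> (\<lambda>b. b \<inter> B) ` P \<in> MCB B"
  hence PC: "P \<subseteq> Bs - {B}" and inj: "inj_on (\<lambda>b. b \<inter> B) P"
    and M: "(\<lambda>b. b \<inter> B) ` P \<in> MCB B" by auto
  have cov: "B \<subseteq> \<Union>P" using M unfolding MCB_def by auto
  have priv: "\<And>b. b \<in> P \<Longrightarrow> \<not> B \<subseteq> \<Union> ((\<lambda>b. b \<inter> B) ` P - {b \<inter> B})"
    using M unfolding MCB_def by auto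
  show "minimal_repair_set Bs B P"
    unfolding minimal_repair_set_def repair_set_def
  proof (intro conjI allI impI notI)
    show "P \<subseteq> Bs - {B}" "B \<subseteq> \<Union>P" using PC cov by auto
    fix Q assume Q: "Q \<subset> P" "Q \<subseteq> Bs - {B} \<and> B \<subseteq> \<Union>Q"
    then obtain b where b: "b \<in> P" "b \<notin> Q" by auto
    have "B \<subseteq> \<Union> ((\<lambda>b. b \<inter> B) ` P - {b \<inter> B})"
    proof
      fix x assume x: "x \<in> B"
      have "x \<in> \<Union>Q" using Q(2) x by blast
      then obtain b' where b': "b' \<in> Q" "x \<in> b'" by blast
      have "b' \<in> P" "b' \<noteq> b" using b' Q b by auto
      hence "b' \<inter> B \<noteq> b \<inter> B" using inj b unfolding inj_on_def by blast
      thus "x \<in> \<Union> ((\<lambda>b. b \<inter> B) ` P - {b \<inter> B})" using b' x \<open>b' \<in> P\<close> by auto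
    qed
    thus False using priv b by blast
  qed
qed

lemma fiber_card:
  assumes "finite S"
  shows "card {P. P \<subseteq> C \<and> inj_on t P \<and> t ` P = S} = (\<Prod>s\<in>S. card {b\<in>C. t b = s})"
proof -
  have "bij_betw (\<lambda>f. f ` S) (PiE S (\<lambda>s. {b\<in>C. t b = s})) {P. P \<subseteq> C \<and> inj_on t P \<and> t ` P = S}"
  proof (rule bij_betwI')
    fix f g assume f: "f \<in> PiE S (\<lambda>s. {b\<in>C. t b = s})" and g: "g \<in> PiE S (\<lambda>s. {b\<in>C. t b = s})"
    show "(f ` S = g ` S) = (f = g)"
    proof
      assume e: "f ` S = g ` S"
      show "f = g"
      proof (rule PiE_ext[OF f g])
        fix s assume s: "s \<in> S"
        then obtain s' where s': "s' \<in> S" "f s = g s'" using e by (metis image_eqI imageE)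
        have "t (f s) = s" using f s by auto
        moreover have "t (g s') = s'" using g s' by auto
        ultimately have "s = s'" using s' by simp
        thus "f s = g s" using s' by simp
      qed
    qed simp
  next
    fix f assume f: "f \<in> PiE S (\<lambda>s. {b\<in>C. t b = s})"
    have ts: "\<And>s. s \<in> S \<Longrightarrow> t (f s) = s" "\<And>s. s \<in> S \<Longrightarrow> f s \<in> C" using f by auto
    show "f ` S \<in> {P. P \<subseteq> C \<and> inj_on t P \<and> t ` P = S}"
    proof (intro CollectI conjI)
      show "f ` S \<subseteq> C" using ts by auto
      show "inj_on t (f ` S)" by (rule inj_onI) (auto simp: ts)
      show "t ` f ` S = S" using ts by (force simp: image_image)
    qed
  next
    fix P assume P: "P \<in> {P. P \<subseteq> C \<and> inj_on t P \<and> t ` P = S}"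
    hence PC: "P \<subseteq> C" and inj: "inj_on t P" and tP: "t ` P = S" by auto
    define f where "f = restrict (the_inv_into P t) S"
    have "f \<in> PiE S (\<lambda>s. {b\<in>C. t b = s})"
      unfolding f_def using PC inj tP
      by (auto simp: f_the_inv_into_f the_inv_into_into)
    moreover have "P = f ` S"
    proof -
      have "f ` S = the_inv_into P t ` S" unfolding f_def by auto
      also have "\<dots> = P" using the_inv_into_onto[OF inj] tP by simp
      finally show ?thesis by simp
    qed
    ultimately show "\<exists>f\<in>PiE S (\<lambda>s. {b\<in>C. t b = s}). P = f ` S" by blast
  qed
  hence "card {P. P \<subseteq> C \<and> inj_on t P \<and> t ` P = S} = card (PiE S (\<lambda>s. {b\<in>C. t b = s}))"
    by (simp add: bij_betw_same_card)
  also have "\<dots> = (\<Prod>s\<in>S. card {b\<in>C. t b = s})" using assms by (rule card_PiE)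
  finally show ?thesis .
qed

lemma sum_minimal:
  fixes p :: real
  assumes fBs: "finite Bs" and fB: "finite B"
  shows "(\<Sum>P\<in>{P. minimal_repair_set Bs B P}. p ^ card P) =
         (\<Sum>S\<in>MCB B. p ^ card S * (\<Prod>s\<in>S. real (card {b\<in>Bs - {B}. b \<inter> B = s})))"
proof -
  let ?t = "\<lambda>b. b \<inter> B"
  let ?C = "Bs - {B}"
  have Meq: "{P. minimal_repair_set Bs B P} = {P. P \<subseteq> ?C \<and> inj_on ?t P \<and> ?t ` P \<in> MCB B}"
    by (simp add: minimal_iff)
  have fM: "finite {P. P \<subseteq> ?C \<and> inj_on ?t P \<and> ?t ` P \<in> MCB B}"
    by (rule rev_finite_subset[of "Pow ?C"]) (use fBs in auto)
  have fMCB: "finite (MCB B)"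
    by (rule rev_finite_subset[of "Pow (Pow B)"]) (use fB in \<open>auto simp: MCB_def\<close>)
  have "(\<Sum>P\<in>{P. P \<subseteq> ?C \<and> inj_on ?t P \<and> ?t ` P \<in> MCB B}. p ^ card P) =
    (\<Sum>S\<in>MCB B. \<Sum>P\<in>{P \<in> {P. P \<subseteq> ?C \<and> inj_on ?t P \<and> ?t ` P \<in> MCB B}. ?t ` P = S}. p ^ card P)"
    by (rule sum.group[symmetric, OF fM fMCB]) auto
  also have "\<dots> = (\<Sum>S\<in>MCB B. p ^ card S * (\<Prod>s\<in>S. real (card {b\<in>?C. b \<inter> B = s})))"
  proof (intro sum.cong refl)
    fix S assume S: "S \<in> MCB B"
    have "S \<subseteq> Pow B" using S unfolding MCB_def by blast
    hence fS: "finite S" using fB by (meson finite_Pow_iff finite_subset)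
    have eq: "{P \<in> {P. P \<subseteq> ?C \<and> inj_on ?t P \<and> ?t ` P \<in> MCB B}. ?t ` P = S}
        = {P. P \<subseteq> ?C \<and> inj_on ?t P \<and> ?t ` P = S}" using S by blast
    have "(\<Sum>P\<in>{P. P \<subseteq> ?C \<and> inj_on ?t P \<and> ?t ` P = S}. p ^ card P)
        = (\<Sum>P\<in>{P. P \<subseteq> ?C \<and> inj_on ?t P \<and> ?t ` P = S}. p ^ card S)"
    proof (intro sum.cong refl)
      fix P assume "P \<in> {P. P \<subseteq> ?C \<and> inj_on ?t P \<and> ?t ` P = S}"
      hence "inj_on ?t P" "?t ` P = S" by auto
      hence "card S = card P" using card_image by blast
      thus "p ^ card P = p ^ card S" by simp
    qed
    also have "\<dots> = p ^ card S * real (card {P. P \<subseteq> ?C \<and> inj_on ?t P \<and> ?t ` P = S})" by simp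
    also have "card {P. P \<subseteq> ?C \<and> inj_on ?t P \<and> ?t ` P = S} = (\<Prod>s\<in>S. card {b\<in>?C. b \<inter> B = s})"
      by (rule fiber_card[OF fS])
    finally show "(\<Sum>P\<in>{P \<in> {P. P \<subseteq> ?C \<and> inj_on ?t P \<and> ?t ` P \<in> MCB B}. ?t ` P = S}. p ^ card P)
        = p ^ card S * (\<Prod>s\<in>S. real (card {b\<in>?C. b \<inter> B = s}))" unfolding eq by simp
  qed
  finally show ?thesis unfolding Meq .
qed


lemma subB_sub: "subB a b c d i \<subseteq> {a,b,c,d}"
  unfolding subB_def by auto

lemma ten_eq: "{0..<10::nat} = {0,1,2,3,4,5,6,7,8,9}" by auto

lemma subB_inj:
  assumes "distinct [a,b,c,d]"
  shows "inj_on (subB a b c d) {0..<10}"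
proof -
  have n: "a \<noteq> b" "a \<noteq> c" "a \<noteq> d" "b \<noteq> c" "b \<noteq> d" "c \<noteq> d"
          "b \<noteq> a" "c \<noteq> a" "d \<noteq> a" "c \<noteq> b" "d \<noteq> b" "d \<noteq> c" using assms by auto
  show ?thesis unfolding inj_on_def ten_eq
    by (simp add: subB_simps n doubleton_eq_iff insert_eq_iff)
qed

lemma subB_onto:
  assumes "distinct [a,b,c,d]" "S \<subseteq> {a,b,c,d}" "card S = 1 \<or> card S = 2"
  shows "S \<in> subB a b c d ` {0..<10}"
proof -
  have im: "subB a b c d ` {0..<10} = {{a},{b},{c},{d},{a,b},{a,c},{a,d},{b,c},{b,d},{c,d}}"
    unfolding ten_eq by (simp add: subB_simps)
  from assms(3) show ?thesis
  proof
    assume "card S = 1"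
    then obtain x where "S = {x}" by (auto simp: card_Suc_eq)
    then show ?thesis using assms(2) unfolding im by auto
  next
    assume "card S = 2"
    then obtain x y where "S = {x,y}" "x \<noteq> y" by (auto simp: card_Suc_eq numeral_eq_Suc)
    then show ?thesis using assms(2) unfolding im by (auto simp: insert_commute)
  qed
qed

lemma MCB_equiv:
  assumes d: "distinct [a,b,c,d]" and K: "K \<subseteq> {0..<10}"
  shows "subB a b c d ` K \<in> MCB {a,b,c,d} \<longleftrightarrow> coverJ a b c d K \<and> privJ a b c d K"
proof -
  let ?f = "subB a b c d"
  have inj: "inj_on ?f {0..<10}" using subB_inj[OF d] .
  have diff: "?f ` K - {?f i} = ?f ` (K - {i})" if "i \<in> K" for i
  proof -
    have "?f ` (K - {i}) = ?f ` K - ?f ` {i}"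
      by (rule inj_on_image_set_diff[OF inj]) (use K that in auto)
    thus ?thesis by simp
  qed
  have sub: "?f ` K \<subseteq> Pow {a,b,c,d}" by (simp add: image_subset_iff subB_sub)
  have cov: "{a,b,c,d} \<subseteq> \<Union>(?f ` K) \<longleftrightarrow> coverJ a b c d K"
    unfolding coverJ_def by auto
  have priv: "(\<forall>s\<in>?f ` K. \<not> {a,b,c,d} \<subseteq> \<Union>(?f ` K - {s})) \<longleftrightarrow> privJ a b c d K"
  proof -
    have "(\<forall>s\<in>?f ` K. \<not> {a,b,c,d} \<subseteq> \<Union>(?f ` K - {s})) \<longleftrightarrow>
          (\<forall>i\<in>K. \<not> {a,b,c,d} \<subseteq> \<Union>(?f ` K - {?f i}))"
      by blast
    also have "\<dots> \<longleftrightarrow> (\<forall>i\<in>K. \<not> {a,b,c,d} \<subseteq> \<Union>(?f ` (K - {i})))"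
      using diff by (simp cong: ball_cong)
    also have "\<dots> \<longleftrightarrow> privJ a b c d K"
      unfolding privJ_def by simp
    finally show ?thesis .
  qed
  have e: "?f ` K \<in> MCB {a,b,c,d} \<longleftrightarrow> (?f ` K \<subseteq> Pow {a,b,c,d} \<and> {a,b,c,d} \<subseteq> \<Union>(?f ` K) \<and>
     (\<forall>s\<in>?f ` K. \<not> {a,b,c,d} \<subseteq> \<Union>(?f ` K - {s})))" unfolding MCB_def by (rule mem_Collect_eq)
  show ?thesis unfolding e cov priv using sub by simp
qed


lemma LP:
  assumes S: "SQS X Bs v" and BB: "B \<in> Bs" and xy: "x \<in> B" "y \<in> B" "x \<noteq> y"
  shows "real (card {b\<in>Bs - {B}. b \<inter> B = {x,y}}) = (real v - 2) / 2 - 1"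
proof -
  let ?R = "{b\<in>Bs. x \<in> b \<and> y \<in> b}"
  have BX: "B \<subseteq> X" using SQS_basic(3)[OF S BB] .
  have fR: "finite ?R" using SQS_basic(5)[OF S] by auto
  have eq: "{b\<in>Bs - {B}. b \<inter> B = {x,y}} = ?R - {B}"
  proof
    show "{b\<in>Bs - {B}. b \<inter> B = {x,y}} \<subseteq> ?R - {B}" by auto
    show "?R - {B} \<subseteq> {b\<in>Bs - {B}. b \<inter> B = {x,y}}"
    proof
      fix b assume b: "b \<in> ?R - {B}"
      have "b \<inter> B \<subseteq> {x,y}"
      proof
        fix z assume z: "z \<in> b \<inter> B"
        show "z \<in> {x,y}"
        proof (rule ccontr)
          assume "z \<notin> {x,y}"
          hence "card {x,y,z} = 3" using xy by auto
          moreover have "{x,y,z} \<subseteq> b" using b z by auto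
          moreover have "{x,y,z} \<subseteq> B" using xy z by auto
          moreover have "b \<in> Bs" using b by auto
          ultimately have "b = B" using SQS_unique[OF S _ BB] by blast
          thus False using b by simp
        qed
      qed
      thus "b \<in> {b\<in>Bs - {B}. b \<inter> B = {x,y}}" using b xy by auto
    qed
  qed
  have "x \<in> X" "y \<in> X" using xy BX by auto
  hence c2: "2 * card ?R = v - 2" using SQS_pair_count[OF S _ _ xy(3)] by blast
  have BR: "B \<in> ?R" using BB xy by auto
  hence "card ?R > 0" using fR card_gt_0_iff by blast
  hence "card ?R \<ge> 1" by simp
  have "card (?R - {B}) = card ?R - 1" using BR fR by simp
  hence "real (card (?R - {B})) = real (card ?R) - 1" using \<open>card ?R \<ge> 1\<close> by (simp add: of_nat_diff)
  moreover have "real (card ?R) = (real v - 2) / 2"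
  proof -
    have "v \<ge> 2" using c2 \<open>card ?R \<ge> 1\<close> by linarith
    hence "real (2 * card ?R) = real v - 2" using c2 by (simp add: of_nat_diff)
    thus ?thesis by simp
  qed
  ultimately show ?thesis unfolding eq by simp
qed

lemma Nbig:
  assumes S: "SQS X Bs v" and BB: "B \<in> Bs" and "3 \<le> card s"
  shows "{b\<in>Bs - {B}. b \<inter> B = s} = {}"
proof (rule ccontr)
  assume "{b\<in>Bs - {B}. b \<inter> B = s} \<noteq> {}"
  then obtain b where b: "b \<in> Bs" "b \<noteq> B" "b \<inter> B = s" by auto
  hence "b = B" using SQS_big_inter[OF S b(1) BB] assms(3) by simp
  thus False using b by simp
qed

lemma LS:
  assumes S: "SQS X Bs v" and BB: "B \<in> Bs" and Beq: "B = {x,y1,y2,y3}" and d: "distinct [x,y1,y2,y3]"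
  shows "real (card {b\<in>Bs - {B}. b \<inter> B = {x}}) = real ((v - 1) choose 2) / 3 - 3 * ((real v - 2) / 2) + 2"
proof -
  let ?R = "{b\<in>Bs. x \<in> b}"
  let ?A = "\<lambda>y. {b\<in>Bs - {B}. b \<inter> B = {x,y}}"
  let ?S0 = "{b\<in>Bs - {B}. b \<inter> B = {x}}"
  have BX: "B \<subseteq> X" using SQS_basic(3)[OF S BB] .
  have fBs: "finite Bs" using SQS_basic(5)[OF S] .
  have no2: "\<not> (u \<in> b \<and> w \<in> b)" if "b \<in> Bs" "b \<noteq> B" "u \<in> {y1,y2,y3}" "w \<in> {y1,y2,y3}" "u \<noteq> w" "x \<in> b" for b u w
  proof
    assume uw: "u \<in> b \<and> w \<in> b"
    have "card {x,u,w} = 3" using that d by auto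
    moreover have "{x,u,w} \<subseteq> B" using that Beq by auto
    moreover have "{x,u,w} \<subseteq> b" using uw that by auto
    ultimately have "b = B" using SQS_unique[OF S that(1) BB] by blast
    thus False using that by simp
  qed
  have Req: "?R = insert B (?A y1 \<union> (?A y2 \<union> (?A y3 \<union> ?S0)))"
  proof
    show "insert B (?A y1 \<union> (?A y2 \<union> (?A y3 \<union> ?S0))) \<subseteq> ?R" using BB Beq by auto
    show "?R \<subseteq> insert B (?A y1 \<union> (?A y2 \<union> (?A y3 \<union> ?S0)))"
    proof
      fix b assume b: "b \<in> ?R"
      show "b \<in> insert B (?A y1 \<union> (?A y2 \<union> (?A y3 \<union> ?S0)))"
      proof (cases "b = B")
        case True thus ?thesis by simp
      next
        case False
        have bB: "b \<in> Bs" "x \<in> b" using b by auto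
        note n = no2[OF bB(1) False _ _ _ bB(2)]
        show ?thesis
        proof (cases "y1 \<in> b")
          case True
          hence "y2 \<notin> b" "y3 \<notin> b" using n[of y1 y2] n[of y1 y3] d by auto
          hence "b \<inter> B = {x,y1}" using True bB Beq by auto
          thus ?thesis using bB False by auto
        next
          case n1: False
          show ?thesis
          proof (cases "y2 \<in> b")
            case True
            hence "y3 \<notin> b" using n[of y2 y3] d by auto
            hence "b \<inter> B = {x,y2}" using True n1 bB Beq by auto
            thus ?thesis using bB False by auto
          next
            case n2: False
            show ?thesis
            proof (cases "y3 \<in> b")
              case True
              hence "b \<inter> B = {x,y3}" using True n1 n2 bB Beq by auto
              thus ?thesis using bB False by auto
            next
              case n3: False
              hence "b \<inter> B = {x}" using n1 n2 bB Beq by auto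
              thus ?thesis using bB False by auto
            qed
          qed
        qed
      qed
    qed
  qed
  have fin: "finite (?A y)" "finite ?S0" for y using fBs by auto
  have ne: "{x,y1} \<noteq> {x,y2}" "{x,y1} \<noteq> {x,y3}" "{x,y2} \<noteq> {x,y3}" "{x,y1} \<noteq> {x}" "{x,y2} \<noteq> {x}" "{x,y3} \<noteq> {x}"
    using d by (auto simp: doubleton_eq_iff)
  have d1: "?A y1 \<inter> (?A y2 \<union> (?A y3 \<union> ?S0)) = {}" using ne by auto
  have d2: "?A y2 \<inter> (?A y3 \<union> ?S0) = {}" using ne by auto
  have d3: "?A y3 \<inter> ?S0 = {}" using ne by auto
  have "card ?R = Suc (card (?A y1 \<union> (?A y2 \<union> (?A y3 \<union> ?S0))))"
    unfolding Req using fin by (subst card_insert_disjoint) auto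
  also have "card (?A y1 \<union> (?A y2 \<union> (?A y3 \<union> ?S0))) = card (?A y1) + (card (?A y2) + (card (?A y3) + card ?S0))"
    using fin d1 d2 d3 by (simp add: card_Un_disjoint)
  finally have cR: "real (card ?R) = 1 + real (card (?A y1)) + real (card (?A y2)) + real (card (?A y3)) + real (card ?S0)"
    by simp
  have a: "real (card (?A y)) = (real v - 2) / 2 - 1" if "y \<in> {y1,y2,y3}" for y
  proof -
    have "x \<in> B" "y \<in> B" "x \<noteq> y" using that Beq d by auto
    thus ?thesis using LP[OF S BB] by blast
  qed
  have "x \<in> X" using BX Beq by auto
  hence "3 * card ?R = (v - 1) choose 2" using SQS_point_count[OF S] by blast
  hence "real (card ?R) = real ((v - 1) choose 2) / 3" by (metis of_nat_mult of_nat_numeral nonzero_mult_div_cancel_left zero_neq_numeral)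
  moreover have "y1 \<in> {y1,y2,y3}" "y2 \<in> {y1,y2,y3}" "y3 \<in> {y1,y2,y3}" by auto
  ultimately show ?thesis using cR a[of y1] a[of y2] a[of y3] by linarith
qed


theorem mainTheorem12:
  fixes X :: "'a set" and \<B> :: "'a set set" and v :: nat and B :: "'a set" and p :: real
  assumes "SQS X \<B> v" and "v \<ge> 8" and "B \<in> \<B>" and "0 \<le> p" and "p \<le> 1"
  defines "r1 \<equiv> real ((v - 1) choose 2) / 3"
      and "r2 \<equiv> (real v - 2) / 2"
  shows "expected_available_repair \<B> B p =
           3 * (r2 - 1)^2 * p^2
         + 2 * (r2 - 1) * (3 * r1^2 - 12 * r1 * r2 + 6 * r1 + 11 * r2^2 - 10 * r2 + 2) * p^3
         + (r1 - 3 * r2 + 2)^4 * p^4"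
proof -
  note S = assms(1)
  note BB = assms(3)
  have fBs: "finite \<B>" using SQS_basic(5)[OF S] .
  have cB: "card B = 4" using SQS_basic(4)[OF S BB] .
  have fB: "finite B" using cB card.infinite by fastforce
  obtain a b c d where Beq: "B = {a,b,c,d}" and dist: "distinct [a,b,c,d]" using card4_obtain[OF cB] by blast
  define n0 where "n0 = r1 - 3 * r2 + 2"
  define m where "m = r2 - 1"
  define N where "N s = real (card {b'\<in>\<B> - {B}. b' \<inter> B = s})" for s
  let ?f = "subB a b c d"
  let ?C = "\<B> - {B}"
  let ?M = "{P. minimal_repair_set \<B> B P}"
  have MC: "?M \<subseteq> Pow ?C" unfolding minimal_repair_set_def repair_set_def by auto
  have fC: "finite ?C" using fBs by auto
  have step1: "expected_available_repair \<B> B p = (\<Sum>P\<in>?M. p ^ card P)"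
    unfolding expected_available_repair_def
    using expected_eq[OF fC MC, of p] by simp
  have step2: "(\<Sum>P\<in>?M. p ^ card P) = (\<Sum>S\<in>MCB B. p ^ card S * (\<Prod>s\<in>S. N s))"
    unfolding N_def by (rule sum_minimal[OF fBs fB])
  have LS': "N {x} = n0" if "B = {x,y1,y2,y3}" "distinct [x,y1,y2,y3]" for x y1 y2 y3
    unfolding N_def n0_def r1_def r2_def using LS[OF S BB that] by simp
  have LP': "N {x,y} = m" if "x \<in> B" "y \<in> B" "x \<noteq> y" for x y
    unfolding N_def m_def r2_def using LP[OF S BB that] by simp
  have Nf: "N (?f i) = (if i < 4 then n0 else m)" if "i \<in> {0..<10}" for i
  proof -
    have "i = 0 \<or> i = 1 \<or> i = 2 \<or> i = 3 \<or> i = 4 \<or> i = 5 \<or> i = 6 \<or> i = 7 \<or> i = 8 \<or> i = 9"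
      using that by auto
    moreover have "N {a} = n0" using LS'[of a b c d] Beq dist by simp
    moreover have "N {b} = n0"
    proof -
      have "B = {b,a,c,d}" "distinct [b,a,c,d]" using Beq dist by auto
      thus ?thesis by (rule LS')
    qed
    moreover have "N {c} = n0"
    proof -
      have "B = {c,a,b,d}" "distinct [c,a,b,d]" using Beq dist by auto
      thus ?thesis by (rule LS')
    qed
    moreover have "N {d} = n0"
    proof -
      have "B = {d,a,b,c}" "distinct [d,a,b,c]" using Beq dist by auto
      thus ?thesis by (rule LS')
    qed
    moreover have "N {a,b} = m" "N {a,c} = m" "N {a,d} = m" "N {b,c} = m" "N {b,d} = m" "N {c,d} = m"
      using LP' Beq dist by auto
    ultimately show ?thesis by (elim disjE) (simp_all add: subB_simps)
  qed
  let ?W = "\<lambda>S. p ^ card S * (\<Prod>s\<in>S. N s)"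
  let ?TB = "?f ` {0..<10}"
  let ?KS = "{K\<in>Pow {0..<10}. coverJ a b c d K \<and> privJ a b c d K}"
  have injf: "inj_on ?f {0..<10}" using subB_inj[OF dist] .
  have fMCB: "finite (MCB B)"
    by (rule rev_finite_subset[of "Pow (Pow B)"]) (use fB in \<open>auto simp: MCB_def\<close>)
  have zero: "?W S = 0" if "S \<in> MCB B - (MCB B \<inter> Pow ?TB)" for S
  proof -
    from that have SM: "S \<in> MCB B" and "S \<notin> Pow ?TB" by blast+
    then obtain s where s: "s \<in> S" "s \<notin> ?TB" by blast
    have sB: "s \<subseteq> B" using SM s unfolding MCB_def by blast
    have fs: "finite s" using sB fB finite_subset by auto
    have "S \<subseteq> Pow B" using SM unfolding MCB_def by blast
    hence fS: "finite S" using fB by (meson finite_Pow_iff finite_subset)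
    have "s \<noteq> {}"
    proof
      assume "s = {}"
      hence "\<Union>(S - {s}) = \<Union>S" by auto
      moreover have "B \<subseteq> \<Union>S" "\<not> B \<subseteq> \<Union>(S - {s})" using SM s unfolding MCB_def by auto
      ultimately show False by simp
    qed
    hence "card s \<noteq> 0" using fs by simp
    moreover have "\<not> (card s = 1 \<or> card s = 2)"
    proof
      assume h: "card s = 1 \<or> card s = 2"
      have "s \<subseteq> {a,b,c,d}" using sB Beq by simp
      from subB_onto[OF dist this h] s(2) show False by blast
    qed
    ultimately have "3 \<le> card s" by linarith
    hence e: "{b'\<in>\<B> - {B}. b' \<inter> B = s} = {}" by (rule Nbig[OF S BB])
    have "N s = 0" unfolding N_def by (simp only: e card.empty of_nat_0)
    hence "(\<Prod>s\<in>S. N s) = 0" using s(1) by (intro prod_zero[OF fS]) blast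
    thus ?thesis by simp
  qed
  have "(\<Sum>S\<in>MCB B. ?W S) = (\<Sum>S\<in>MCB B \<inter> Pow ?TB. ?W S)"
    by (rule sum.mono_neutral_right[OF fMCB]) (use zero in auto)
  also have "MCB B \<inter> Pow ?TB = image ?f ` ?KS"
  proof
    show "MCB B \<inter> Pow ?TB \<subseteq> image ?f ` ?KS"
    proof
      fix S assume S: "S \<in> MCB B \<inter> Pow ?TB"
      define K where "K = {i\<in>{0..<10}. ?f i \<in> S}"
      have SK: "S = ?f ` K" using S unfolding K_def by auto
      have Ksub: "K \<subseteq> {0..<10}" unfolding K_def by auto
      have "coverJ a b c d K \<and> privJ a b c d K" using MCB_equiv[OF dist Ksub] S SK Beq by simp
      thus "S \<in> image ?f ` ?KS" using SK Ksub by blast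
    qed
    show "image ?f ` ?KS \<subseteq> MCB B \<inter> Pow ?TB"
    proof
      fix S assume "S \<in> image ?f ` ?KS"
      then obtain K where K: "K \<in> ?KS" "S = ?f ` K" by blast
      have Ksub: "K \<subseteq> {0..<10}" using K by auto
      have "S \<in> MCB B" using MCB_equiv[OF dist Ksub] K Beq by simp
      moreover have "S \<in> Pow ?TB" using K Ksub by auto
      ultimately show "S \<in> MCB B \<inter> Pow ?TB" by blast
    qed
  qed
  also have "(\<Sum>S\<in>image ?f ` ?KS. ?W S) = (\<Sum>K\<in>?KS. ?W (?f ` K))"
  proof (rule sum.reindex_cong[OF _ refl refl])
    show "inj_on (image ?f) ?KS"
      using inj_on_image_Pow[OF injf] by (rule inj_on_subset) auto
  qed
  also have "\<dots> = (\<Sum>K\<in>?KS. wJ n0 m p K)"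
  proof (intro sum.cong refl)
    fix K assume "K \<in> ?KS"
    hence Ksub: "K \<subseteq> {0..<10}" by auto
    have injK: "inj_on ?f K" using inj_on_subset[OF injf Ksub] .
    have "card (?f ` K) = card K" using card_image[OF injK] .
    moreover have "(\<Prod>s\<in>?f ` K. N s) = (\<Prod>i\<in>K. N (?f i))" using prod.reindex[OF injK] by simp
    moreover have "(\<Prod>i\<in>K. N (?f i)) = (\<Prod>i\<in>K. if i < 4 then n0 else m)"
      using Nf Ksub by (intro prod.cong refl) auto
    ultimately show "?W (?f ` K) = wJ n0 m p K" unfolding wJ_def by simp
  qed
  also have "\<dots> = (\<Sum>K\<in>Pow {0..<10::nat}. if coverJ a b c d K \<and> privJ a b c d K then wJ n0 m p K else 0)"
    by (rule sum.inter_filter) simp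
  also have "\<dots> = 3 * m^2 * p^2 + (6*m*n0^2 + 12*m^2*n0 + 4*m^3) * p^3 + n0^4 * p^4"
    by (rule core[OF dist])
  finally have step4: "(\<Sum>S\<in>MCB B. ?W S) = 3 * m^2 * p^2 + (6*m*n0^2 + 12*m^2*n0 + 4*m^3) * p^3 + n0^4 * p^4" .
  have coef: "6*m*n0^2 + 12*m^2*n0 + 4*m^3 =
     2 * (r2 - 1) * (3 * r1^2 - 12 * r1 * r2 + 6 * r1 + 11 * r2^2 - 10 * r2 + 2)"
    unfolding m_def n0_def by algebra
  show ?thesis
    unfolding step1 step2 step4 coef unfolding n0_def m_def by simp
qed

end
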